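(* Let $\lambda,\mu\ge0$, let $w\ge1$ and $n\ge 0$ be integers, $a=1+\lambda^2$, $b=1+\mu^2$. Let $$D_w(p)=(1-\lambda^2p^2)(1-\mu^2p^2)-(\lambda^2-p^2)(\mu^2-p^2)p^{2w}$$ and $$f(p)=\frac{(1-p^2)\left[(1-\mu^2p^2)+(\mu^2-p^2)p^{2w}\right]}{D_w(p)}\left(\frac{1+p^2}{p}\right)^n\frac1p.$$ Then $$Z_{n,w}(a,b)=-\frac12\sum_{p_k}\mathrm{Res}(f;p_k),$$ where the sum runs over the (distinct complex) zeros $p_k$ of $D_w$.
   Context: A loop of length $n$ in the slit of width $w$ is a lattice path in $\mathbb{Z}^2$ with $n$ steps, each equal to $(1,1)$ or $(1,-1)$, starting at $(0,0)$ and ending at $(n,0)$, all of whose vertices $(x,y)$ satisfy $0\le y\le w$. For such a path $P$, let $u(P)$ be the number of its vertices on the line $y=0$ excluding the initial vertex, and $v(P)$ the number of its vertices on the line $y=w$. The partition function is $Z_{n,w}(a,b)=\sum_P a^{u(P)}b^{v(P)}$, the sum over all loops of length $n$ in the slit of width $w$. *)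

theory Defs
  imports "HOL-Complex_Analysis.Complex_Analysis"
begin

text \<open>A step sequence is a list of integers in {1,-1}; the height of the vertex
  with x-coordinate i is the sum of the first i steps.\<close>

definition path_height :: "int list \<Rightarrow> nat \<Rightarrow> int" where
  "path_height s i = sum_list (take i s)"

definition slit_loops :: "nat \<Rightarrow> nat \<Rightarrow> int list set" where
  "slit_loops n w = {s. length s = n \<and> set s \<subseteq> {1, -1} \<and>
      (\<forall>i\<le>n. 0 \<le> path_height s i \<and> path_height s i \<le> int w) \<and>
      path_height s n = 0}"

definition loop_u :: "int list \<Rightarrow> nat" where
  "loop_u s = card {i \<in> {1..length s}. path_height s i = 0}"

definition loop_v :: "nat \<Rightarrow> int list \<Rightarrow> nat" where
  "loop_v w s = card {i \<in> {0..length s}. path_height s i = int w}"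

definition Zpf :: "nat \<Rightarrow> nat \<Rightarrow> real \<Rightarrow> real \<Rightarrow> real" where
  "Zpf n w a b = (\<Sum>s\<in>slit_loops n w. a ^ loop_u s * b ^ loop_v w s)"

definition Dw :: "real \<Rightarrow> real \<Rightarrow> nat \<Rightarrow> complex \<Rightarrow> complex" where
  "Dw lam mu w p =
     (1 - (of_real lam)^2 * p^2) * (1 - (of_real mu)^2 * p^2)
     - ((of_real lam)^2 - p^2) * ((of_real mu)^2 - p^2) * p^(2*w)"

definition fres :: "real \<Rightarrow> real \<Rightarrow> nat \<Rightarrow> nat \<Rightarrow> complex \<Rightarrow> complex" where
  "fres lam mu w n p =
     (1 - p^2) * ((1 - (of_real mu)^2 * p^2) + ((of_real mu)^2 - p^2) * p^(2*w)) / Dw lam mu w p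
     * ((1 + p^2) / p) ^ n * (1 / p)"

end

theory Submission
  imports Defs
begin


definition Pn :: "nat \<Rightarrow> nat \<Rightarrow> int \<Rightarrow> int list set" where
  "Pn w n h = {s. length s = n \<and> set s \<subseteq> {1, -1} \<and>
      (\<forall>i\<le>n. 0 \<le> path_height s i \<and> path_height s i \<le> int w) \<and> path_height s n = h}"

definition wt :: "nat \<Rightarrow> complex \<Rightarrow> complex \<Rightarrow> int list \<Rightarrow> complex" where
  "wt w a b s = a ^ loop_u s * b ^ loop_v w s"

definition V :: "nat \<Rightarrow> complex \<Rightarrow> complex \<Rightarrow> nat \<Rightarrow> int \<Rightarrow> complex" where
  "V w a b n h = (\<Sum>s\<in>Pn w n h. wt w a b s)"

lemma ph_app_le: "i \<le> length s \<Longrightarrow> path_height (s @ [x]) i = path_height s i"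
  by (simp add: path_height_def)

lemma ph_app_last: "path_height (s @ [x]) (Suc (length s)) = path_height s (length s) + x"
  by (simp add: path_height_def)

lemma ph_Nil: "path_height [] i = 0" by (simp add: path_height_def)

lemma loop_u_app: "loop_u (s @ [x]) = loop_u s + (if path_height s (length s) + x = 0 then 1 else 0)"
proof -
  have "{i \<in> {1..length (s@[x])}. path_height (s@[x]) i = 0} =
        {i \<in> {1..length s}. path_height s i = 0} \<union>
        (if path_height s (length s) + x = 0 then {Suc (length s)} else {})"
    by (auto simp: ph_app_le ph_app_last le_Suc_eq)
  moreover have "finite {i \<in> {1..length s}. path_height s i = 0}" by simp
  moreover have "Suc (length s) \<notin> {i \<in> {1..length s}. path_height s i = 0}" by simp
  ultimately show ?thesis unfolding loop_u_def by (auto simp: card_insert_if)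
qed

lemma loop_v_app: "loop_v w (s @ [x]) = loop_v w s + (if path_height s (length s) + x = int w then 1 else 0)"
proof -
  have "{i \<in> {0..length (s@[x])}. path_height (s@[x]) i = int w} =
        {i \<in> {0..length s}. path_height s i = int w} \<union>
        (if path_height s (length s) + x = int w then {Suc (length s)} else {})"
    by (auto simp: ph_app_le ph_app_last le_Suc_eq)
  moreover have "finite {i \<in> {0..length s}. path_height s i = int w}" by simp
  moreover have "Suc (length s) \<notin> {i \<in> {0..length s}. path_height s i = int w}" by simp
  ultimately show ?thesis unfolding loop_v_def by (auto simp: card_insert_if)
qed

definition cw :: "nat \<Rightarrow> complex \<Rightarrow> complex \<Rightarrow> int \<Rightarrow> complex" where
  "cw w a b h = (if h = 0 then a else 1) * (if h = int w then b else 1)"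

lemma wt_app: "wt w a b (s @ [x]) = wt w a b s * cw w a b (path_height s (length s) + x)"
  by (simp add: wt_def cw_def loop_u_app loop_v_app power_add)

lemma finite_Pn: "finite (Pn w n h)"
proof -
  have "Pn w n h \<subseteq> {xs. set xs \<subseteq> {1,-1} \<and> length xs = n}" by (auto simp: Pn_def)
  moreover have "finite {xs. set xs \<subseteq> {1::int,-1} \<and> length xs = n}"
    by (rule finite_lists_length_eq) simp
  ultimately show ?thesis by (rule finite_subset)
qed

lemma Pn_out: "h < 0 \<or> h > int w \<Longrightarrow> Pn w n h = {}"
  by (auto simp: Pn_def)

lemma V_out: "h < 0 \<or> h > int w \<Longrightarrow> V w a b n h = 0"
  by (simp add: V_def Pn_out)

lemma Pn_0: "Pn w 0 h = (if h = 0 then {[]} else {})"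
  by (auto simp: Pn_def ph_Nil)

lemma wt_Nil: "w \<ge> 1 \<Longrightarrow> wt w a b [] = 1"
proof -
  assume w: "w \<ge> 1"
  have "loop_u [] = 0" by (simp add: loop_u_def)
  moreover have "loop_v w [] = 0" using w by (simp add: loop_v_def ph_Nil)
  ultimately show ?thesis by (simp add: wt_def)
qed

lemma V_0: "w \<ge> 1 \<Longrightarrow> V w a b 0 h = (if h = 0 then 1 else 0)"
  by (simp add: V_def Pn_0 wt_Nil)

lemma Pn_Suc:
  assumes "0 \<le> h" "h \<le> int w"
  shows "Pn w (Suc n) h = (\<lambda>s. s @ [1]) ` Pn w n (h - 1) \<union> (\<lambda>s. s @ [-1]) ` Pn w n (h + 1)"
proof (intro equalityI subsetI)
  fix t assume t: "t \<in> Pn w (Suc n) h"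
  then have "length t = Suc n" by (simp add: Pn_def)
  then obtain s x where tx: "t = s @ [x]" and ls: "length s = n"
    by (metis append_butlast_last_id length_Suc_conv_rev list.distinct(1) length_butlast diff_Suc_1)
  from t tx have x: "x = 1 \<or> x = -1" by (auto simp: Pn_def)
  have hs: "\<forall>i\<le>n. 0 \<le> path_height s i \<and> path_height s i \<le> int w"
  proof (intro allI impI)
    fix i assume i: "i \<le> n"
    then have "i \<le> Suc n" by simp
    then have "0 \<le> path_height t i \<and> path_height t i \<le> int w" using t by (simp add: Pn_def)
    then show "0 \<le> path_height s i \<and> path_height s i \<le> int w" using tx ls i by (simp add: ph_app_le)
  qed
  have hl: "path_height s n + x = h" using t tx ls ph_app_last[of s x] by (simp add: Pn_def)
  have sset: "set s \<subseteq> {1,-1}" using t tx by (auto simp: Pn_def)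
  show "t \<in> (\<lambda>s. s @ [1]) ` Pn w n (h - 1) \<union> (\<lambda>s. s @ [-1]) ` Pn w n (h + 1)"
    using x hs hl sset ls tx by (auto simp: Pn_def)
next
  fix t assume "t \<in> (\<lambda>s. s @ [1]) ` Pn w n (h - 1) \<union> (\<lambda>s. s @ [-1]) ` Pn w n (h + 1)"
  then obtain s x where tx: "t = s @ [x]" and x: "x = 1 \<or> x = -1" and s: "s \<in> Pn w n (h - x)"
    by auto
  have ls: "length s = n" using s by (simp add: Pn_def)
  have "\<forall>i\<le>Suc n. 0 \<le> path_height t i \<and> path_height t i \<le> int w"
  proof (intro allI impI)
    fix i assume "i \<le> Suc n"
    then consider "i \<le> n" | "i = Suc n" by linarith
    then show "0 \<le> path_height t i \<and> path_height t i \<le> int w"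
    proof cases
      case 1 then show ?thesis using s ls tx by (simp add: ph_app_le Pn_def)
    next
      case 2 then show ?thesis using s ls tx assms ph_app_last[of s x] by (simp add: Pn_def)
    qed
  qed
  then show "t \<in> Pn w (Suc n) h"
    using s ls tx x ph_app_last[of s x] by (auto simp: Pn_def)
qed

lemma V_Suc:
  assumes "0 \<le> h" "h \<le> int w"
  shows "V w a b (Suc n) h = cw w a b h * (V w a b n (h - 1) + V w a b n (h + 1))"
proof -
  have inj1: "inj_on (\<lambda>s. s @ [1::int]) A" for A by (auto simp: inj_on_def)
  have inj2: "inj_on (\<lambda>s. s @ [-1::int]) A" for A by (auto simp: inj_on_def)
  have disj: "(\<lambda>s. s @ [1]) ` Pn w n (h - 1) \<inter> (\<lambda>s. s @ [-1]) ` Pn w n (h + 1) = {}" by auto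
  have e1: "wt w a b (s @ [1]) = wt w a b s * cw w a b h" if "s \<in> Pn w n (h - 1)" for s
    using that by (simp add: wt_app Pn_def)
  have e2: "wt w a b (s @ [-1]) = wt w a b s * cw w a b h" if "s \<in> Pn w n (h + 1)" for s
    using that by (simp add: wt_app Pn_def)
  have "V w a b (Suc n) h = (\<Sum>s\<in>(\<lambda>s. s @ [1]) ` Pn w n (h - 1). wt w a b s) +
                         (\<Sum>s\<in>(\<lambda>s. s @ [-1]) ` Pn w n (h + 1). wt w a b s)"
    unfolding V_def Pn_Suc[OF assms] by (rule sum.union_disjoint) (auto simp: finite_Pn)
  also have "\<dots> = (\<Sum>s\<in>Pn w n (h - 1). wt w a b s * cw w a b h) + (\<Sum>s\<in>Pn w n (h + 1). wt w a b s * cw w a b h)"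
    by (simp add: sum.reindex[OF inj1] sum.reindex[OF inj2] e1 e2 cong: sum.cong)
  also have "\<dots> = cw w a b h * (V w a b n (h - 1) + V w a b n (h + 1))"
    unfolding V_def distrib_left sum_distrib_left by (simp add: mult.commute)
  finally show ?thesis .
qed



definition Dfps :: "complex \<Rightarrow> complex \<Rightarrow> nat \<Rightarrow> complex fps" where
  "Dfps L M w = (1 - fps_const L * fps_X^2) * (1 - fps_const M * fps_X^2)
     - (fps_const L - fps_X^2) * (fps_const M - fps_X^2) * fps_X^(2*w)"

definition Pfps :: "complex \<Rightarrow> nat \<Rightarrow> nat \<Rightarrow> complex fps" where
  "Pfps M w h = (1 - fps_X^2) * ((1 - fps_const M * fps_X^2) * fps_X^h + (fps_const M - fps_X^2) * fps_X^(2*w-h))"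

lemma Dfps_0: "w \<ge> 1 \<Longrightarrow> fps_nth (Dfps L M w) 0 = 1"
  unfolding Dfps_def fps_sub_nth fps_mult_nth_0 fps_nth_fps_const fps_one_nth fps_X_power_nth by simp

lemma aI2: fixes x m y :: "'a::comm_ring_1"
  shows "(1+x^2)*((1-x^2)*((1-m*x^2)*(x*y) + (m-x^2)*(x*y))) = (1+m)*x*((1-x^2)*((1-m*x^2)*y + (m-x^2)*(x*(x*y))))"
  by (simp add: algebra_simps power2_eq_square)
lemma aI3: fixes x m l y :: "'a::comm_ring_1"
  shows "(1+x^2)*((1-x^2)*((1-m*x^2) + (m-x^2)*(x*(x*y)))) = (1+l)*x*((1-x^2)*((1-m*x^2)*x + (m-x^2)*(x*y))) + (1-x^2)*((1-l*x^2)*(1-m*x^2) - (l-x^2)*(m-x^2)*(x*(x*y)))"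
  by (simp add: algebra_simps power2_eq_square)
lemma aI1: fixes x m y z :: "'a::comm_ring_1"
  shows "(1+x^2)*((1-x^2)*((1-m*x^2)*(x*y) + (m-x^2)*(x*(x*z)))) = x*((1-x^2)*((1-m*x^2)*y + (m-x^2)*(x*(x*(x*z)))) + (1-x^2)*((1-m*x^2)*(x*(x*y)) + (m-x^2)*(x*z)))"
  by (simp add: algebra_simps power2_eq_square)

lemma I1:
  assumes "1 \<le> h" "h + 1 \<le> w"
  shows "(1 + fps_X^2) * Pfps M w h = fps_X * (Pfps M w (h - 1) + Pfps M w (h + 1))"
proof -
  obtain k where k: "h = Suc k" using assms by (cases h) auto
  obtain j where j: "2*w - Suc k = Suc (Suc j)" using assms k by (intro that[of "2*w-h-2"]) linarith
  have j1: "2*w - k = Suc (Suc (Suc j))" using j by linarith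
  have j2: "2*w - Suc (Suc k) = Suc j" using j by linarith
  have r: "(1 + fps_X^2) * Pfps M w (Suc k) = fps_X * (Pfps M w k + Pfps M w (Suc (Suc k)))"
    unfolding Pfps_def j j1 j2 power_Suc by (rule aI1)
  have hk: "h - 1 = k" "h + 1 = Suc (Suc k)" using k by simp_all
  show ?thesis unfolding hk unfolding k by (rule r)
qed

lemma fps_const_1p: "fps_const (1 + c) = 1 + fps_const (c::complex)"
proof -
  have "fps_const 1 + fps_const c = fps_const (1 + c)" by (rule fps_const_add)
  then show ?thesis by simp
qed

lemma I2:
  assumes "1 \<le> w"
  shows "(1 + fps_X^2) * Pfps M w w = fps_const (1 + M) * fps_X * Pfps M w (w - 1)"
proof -
  obtain k where k: "w = Suc k" using assms by (cases w) auto
  have e1: "2 * Suc k - Suc k = Suc k" by simp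
  have e2: "2 * Suc k - k = Suc (Suc k)" by simp
  have r: "(1 + fps_X^2) * Pfps M (Suc k) (Suc k) = fps_const (1 + M) * fps_X * Pfps M (Suc k) k"
    unfolding Pfps_def e1 e2 power_Suc fps_const_1p by (rule aI2)
  have hk: "w - 1 = k" using k by simp
  show ?thesis unfolding hk unfolding k by (rule r)
qed

lemma I3:
  assumes "1 \<le> w"
  shows "(1 + fps_X^2) * Pfps M w 0 = fps_const (1 + L) * fps_X * Pfps M w 1 + (1 - fps_X^2) * Dfps L M w"
proof -
  obtain k where k: "2*w = Suc (Suc k)" using assms by (cases w) auto
  have e1: "2*w - 1 = Suc k" using k by simp
  have e0: "2*w - 0 = Suc (Suc k)" using k by simp
  show ?thesis
    unfolding Pfps_def Dfps_def e1 e0 unfolding k power_Suc power_one_right power_0 mult_1_right fps_const_1p by (rule aI3)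
qed



definition Gf :: "complex \<Rightarrow> complex \<Rightarrow> nat \<Rightarrow> nat \<Rightarrow> complex fps" where
  "Gf L M w h = Pfps M w h * inverse (Dfps L M w)"

definition cc :: "complex \<Rightarrow> complex \<Rightarrow> nat \<Rightarrow> nat \<Rightarrow> nat \<Rightarrow> complex" where
  "cc L M w n h = fps_nth ((1 + fps_X^2)^n * Gf L M w h) n"

lemma binom_nth: "fps_nth ((1 + fps_X^2 :: complex fps)^n) k = (if even k then of_nat (n choose (k div 2)) else 0)"
proof (induction n arbitrary: k)
  case 0 then show ?case by (cases k) auto
next
  case (Suc n)
  have "(1 + fps_X^2 :: complex fps)^Suc n = (1 + fps_X^2)^n + fps_X^2 * (1 + fps_X^2)^n"
    by (simp add: algebra_simps)
  then have e: "fps_nth ((1 + fps_X^2 :: complex fps)^Suc n) k = fps_nth ((1 + fps_X^2)^n) k + (if k < 2 then 0 else fps_nth ((1 + fps_X^2)^n) (k - 2))"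
    by (simp only: fps_add_nth fps_X_power_mult_nth)
  show ?case
  proof (cases "k < 2")
    case True then consider "k = 0" | "k = 1" by linarith
    then show ?thesis using e Suc by cases auto
  next
    case False
    then obtain m where m: "k = Suc (Suc m)" by (metis add_2_eq_Suc le_add_diff_inverse not_less)
    show ?thesis
    proof (cases "even m")
      case True
      then obtain q where q: "m = 2*q" by auto
      have "k div 2 = Suc q" using m q by simp
      then show ?thesis using e Suc m q by simp
    next
      case False then show ?thesis using e Suc m by simp
    qed
  qed
qed

lemma Q: "fps_nth ((1 + fps_X^2 :: complex fps)^n * (1 - fps_X^2)) (Suc n) = 0"
proof -
  have "(1 + fps_X^2 :: complex fps)^n * (1 - fps_X^2) = (1 + fps_X^2)^n - fps_X^2 * (1 + fps_X^2)^n"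
    by (simp add: algebra_simps)
  then have e: "fps_nth ((1 + fps_X^2 :: complex fps)^n * (1 - fps_X^2)) (Suc n) = fps_nth ((1 + fps_X^2)^n) (Suc n) - (if Suc n < 2 then 0 else fps_nth ((1 + fps_X^2)^n) (Suc n - 2))"
    by (simp only: fps_sub_nth fps_X_power_mult_nth)
  also have "\<dots> = (if even (Suc n) then of_nat (n choose (Suc n div 2)) else 0) - (if Suc n < 2 then 0 else if even (Suc n - 2) then of_nat (n choose ((Suc n - 2) div 2)) else 0)"
    by (simp only: binom_nth)
  finally have e': "fps_nth ((1 + fps_X^2 :: complex fps)^n * (1 - fps_X^2)) (Suc n) = (if even (Suc n) then of_nat (n choose (Suc n div 2)) else 0) - (if Suc n < 2 then 0 else if even (Suc n - 2) then of_nat (n choose ((Suc n - 2) div 2)) else 0)" .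
  show ?thesis
  proof (cases n)
    case 0 then show ?thesis using e' by simp
  next
    case (Suc m)
    show ?thesis
    proof (cases "even m")
      case True
      then obtain q where q: "m = 2*q" by auto
      have "Suc (2*q) choose Suc q = Suc (2*q) choose q"
        by (subst binomial_symmetric) auto
      then show ?thesis using e' Suc q by simp
    next
      case False then show ?thesis using e' Suc by simp
    qed
  qed
qed

lemma G1:
  assumes "1 \<le> h" "h + 1 \<le> w"
  shows "(1 + fps_X^2) * Gf L M w h = fps_X * (Gf L M w (h - 1) + Gf L M w (h + 1))"
  unfolding Gf_def
  by (simp only: mult.assoc[symmetric] I1[OF assms]) (simp add: algebra_simps)

lemma G2:
  assumes "1 \<le> w"
  shows "(1 + fps_X^2) * Gf L M w w = fps_const (1 + M) * fps_X * Gf L M w (w - 1)"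
  unfolding Gf_def
  by (simp only: mult.assoc[symmetric] I2[OF assms])

lemma G3:
  assumes "1 \<le> w"
  shows "(1 + fps_X^2) * Gf L M w 0 = fps_const (1 + L) * fps_X * Gf L M w 1 + (1 - fps_X^2)"
proof -
  have inv: "Dfps L M w * inverse (Dfps L M w) = 1"
    by (rule inverse_mult_eq_1') (use Dfps_0[OF assms] in simp)
  have "(1 + fps_X^2) * Gf L M w 0 = ((1 + fps_X^2) * Pfps M w 0) * inverse (Dfps L M w)"
    unfolding Gf_def by (simp only: mult.assoc)
  also have "\<dots> = (fps_const (1 + L) * fps_X * Pfps M w 1 + (1 - fps_X^2) * Dfps L M w) * inverse (Dfps L M w)"
    by (rule arg_cong[where f="\<lambda>x. x * inverse (Dfps L M w)"]) (rule I3[OF assms])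
  also have "\<dots> = fps_const (1 + L) * fps_X * Gf L M w 1 + (1 - fps_X^2) * (Dfps L M w * inverse (Dfps L M w))"
    unfolding Gf_def by (simp only: distrib_right mult.assoc)
  finally show ?thesis using inv by simp
qed

lemma Gf_0:
  assumes "w \<ge> 1" "h \<le> w"
  shows "fps_nth (Gf L M w h) 0 = (if h = 0 then 1 else 0)"
proof -
  have a: "fps_nth (Gf L M w h) 0 = fps_nth (Pfps M w h) 0 * inverse (fps_nth (Dfps L M w) 0)"
    by (simp only: Gf_def fps_mult_nth_0 fps_inverse_nth_0)
  have b: "2*w - h \<noteq> 0" using assms by linarith
  have c: "fps_nth (Pfps M w h) 0 = (1 - 0) * ((1 - M * 0) * fps_nth (fps_X^h) 0 + (M - 0) * fps_nth (fps_X^(2*w-h)) 0)"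
    by (simp only: Pfps_def fps_mult_nth_0 fps_add_nth fps_sub_nth fps_X_power_nth fps_one_nth fps_nth_fps_const) simp
  have d: "fps_nth (Pfps M w h) 0 = (if h = 0 then 1 else 0)"
    unfolding c fps_X_power_nth using b by simp
  show ?thesis unfolding a d Dfps_0[OF assms(1)] by simp
qed


lemma cc_step: "cc L M w (Suc n) h = fps_nth ((1 + fps_X^2)^n * ((1 + fps_X^2) * Gf L M w h)) (Suc n)"
  unfolding cc_def by (simp add: mult_ac)

lemma cc_interior:
  assumes "1 \<le> h" "h + 1 \<le> w"
  shows "cc L M w (Suc n) h = cc L M w n (h - 1) + cc L M w n (h + 1)"
proof -
  have hh: "(1 + fps_X^2)^n * (fps_X * (Gf L M w (h - 1) + Gf L M w (h + 1))) = fps_X * ((1 + fps_X^2)^n * Gf L M w (h - 1) + (1 + fps_X^2)^n * Gf L M w (h + 1))"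
    by (simp only: distrib_left mult.left_commute[of _ fps_X])
  show ?thesis unfolding cc_step G1[OF assms] hh unfolding fps_X_mult_nth fps_add_nth cc_def by simp
qed

lemma cc_top:
  assumes "1 \<le> w"
  shows "cc L M w (Suc n) w = (1 + M) * cc L M w n (w - 1)"
proof -
  have hh: "(1 + fps_X^2)^n * (fps_const (1 + M) * fps_X * Gf L M w (w - 1)) = fps_X * (fps_const (1 + M) * ((1 + fps_X^2)^n * Gf L M w (w - 1)))"
    by (simp add: mult_ac)
  show ?thesis unfolding cc_step G2[OF assms] hh unfolding fps_X_mult_nth fps_mult_left_const_nth cc_def by simp
qed

lemma cc_bot:
  assumes "1 \<le> w"
  shows "cc L M w (Suc n) 0 = (1 + L) * cc L M w n 1"
proof -
  have "cc L M w (Suc n) 0 = fps_nth (fps_X * (fps_const (1 + L) * ((1 + fps_X^2)^n * Gf L M w 1))) (Suc n) + fps_nth ((1 + fps_X^2)^n * (1 - fps_X^2)) (Suc n)"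
    unfolding cc_step G3[OF assms] by (simp add: distrib_left mult_ac)
  then show ?thesis by (simp add: Q cc_def)
qed



lemma V_cc:
  assumes w: "w \<ge> 1"
  shows "\<forall>h\<le>w. V w (1 + L) (1 + M) n (int h) = cc L M w n h"
proof (induction n)
  case 0
  show ?case
  proof (intro allI impI)
    fix h assume h: "h \<le> w"
    have "cc L M w 0 h = fps_nth (Gf L M w h) 0" by (simp add: cc_def)
    then show "V w (1 + L) (1 + M) 0 (int h) = cc L M w 0 h"
      using Gf_0[OF w h] V_0[OF w] by simp
  qed
next
  case (Suc n)
  show ?case
  proof (intro allI impI)
    fix h assume h: "h \<le> w"
    have w0: "int w \<noteq> 0" using w by simp
    consider "h = 0" | "h = w" | "1 \<le> h" "h + 1 \<le> w" using h w by linarith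
    then show "V w (1 + L) (1 + M) (Suc n) (int h) = cc L M w (Suc n) h"
    proof cases
      case 1
      have "V w (1 + L) (1 + M) (Suc n) 0 = (1 + L) * (V w (1 + L) (1 + M) n (-1) + V w (1 + L) (1 + M) n 1)"
        using V_Suc[of 0 w "1+L" "1+M" n] w0 by (simp add: cw_def)
      also have "\<dots> = (1 + L) * cc L M w n 1"
      proof -
        have "V w (1 + L) (1 + M) n (-1) = 0" by (rule V_out) simp
        moreover have "V w (1 + L) (1 + M) n (int 1) = cc L M w n 1" by (rule Suc.IH[rule_format]) (rule w)
        ultimately show ?thesis by simp
      qed
      also have "\<dots> = cc L M w (Suc n) 0" using cc_bot[OF w] by simp
      finally show ?thesis using 1 by simp
    next
      case 2
      have "V w (1 + L) (1 + M) (Suc n) (int w) = (1 + M) * (V w (1 + L) (1 + M) n (int w - 1) + V w (1 + L) (1 + M) n (int w + 1))"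
        using V_Suc[of "int w" w "1+L" "1+M" n] w0 by (simp add: cw_def)
      also have "V w (1 + L) (1 + M) n (int w + 1) = 0" by (rule V_out) simp
      also have "int w - 1 = int (w - 1)" using w by simp
      also have "V w (1 + L) (1 + M) n (int (w - 1)) = cc L M w n (w - 1)" by (rule Suc.IH[rule_format]) simp
      also have "(1 + M) * (cc L M w n (w - 1) + 0) = cc L M w (Suc n) w" using cc_top[OF w] by simp
      finally show ?thesis using 2 by simp
    next
      case 3
      have hw: "int h \<noteq> int w" "int h \<noteq> 0" using 3 by auto
      have "V w (1 + L) (1 + M) (Suc n) (int h) = V w (1 + L) (1 + M) n (int h - 1) + V w (1 + L) (1 + M) n (int h + 1)"
        using V_Suc[of "int h" w "1+L" "1+M" n] 3 hw by (simp add: cw_def)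
      also have "int h - 1 = int (h - 1)" using 3 by auto
      also have "int h + 1 = int (h + 1)" using 3 by auto
      also have "V w (1 + L) (1 + M) n (int (h - 1)) = cc L M w n (h - 1)" by (rule Suc.IH[rule_format]) (use 3 in linarith)
      also have "V w (1 + L) (1 + M) n (int (h + 1)) = cc L M w n (h + 1)" by (rule Suc.IH[rule_format]) (use 3 in linarith)
      also have "cc L M w n (h - 1) + cc L M w n (h + 1) = cc L M w (Suc n) h" using cc_interior[OF 3] by simp
      finally show ?thesis .
    qed
  qed
qed



lemma Dg_sym:
  fixes q X L M :: complex
  assumes "q \<noteq> 0" "X \<noteq> 0"
  shows "(1 - L * (1/q)^2) * (1 - M * (1/q)^2) - (L - (1/q)^2) * (M - (1/q)^2) * (1/X)
       = - ((1 - L * q^2) * (1 - M * q^2) - (L - q^2) * (M - q^2) * X) / (q^4 * X)"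
  using assms by (simp add: field_simps power2_eq_square power4_eq_xxxx)

lemma F_sym:
  fixes q X L M T :: complex
  assumes q: "q \<noteq> 0" and X: "X \<noteq> 0"
    and D: "(1 - L * q^2) * (1 - M * q^2) - (L - q^2) * (M - q^2) * X \<noteq> 0"
  shows "(1 - (1/q)^2) * ((1 - M * (1/q)^2) + (M - (1/q)^2) * (1/X)) /
           ((1 - L * (1/q)^2) * (1 - M * (1/q)^2) - (L - (1/q)^2) * (M - (1/q)^2) * (1/X)) * T * (1 / (1/q))
       = - (q^2) * ((1 - q^2) * ((1 - M * q^2) + (M - q^2) * X) /
           ((1 - L * q^2) * (1 - M * q^2) - (L - q^2) * (M - q^2) * X) * T * (1 / q))"
proof -
  define D0 where "D0 = (1 - L * q^2) * (1 - M * q^2) - (L - q^2) * (M - q^2) * X"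
  have e: "(1 - L * (1/q)^2) * (1 - M * (1/q)^2) - (L - (1/q)^2) * (M - (1/q)^2) * (1/X) = - D0 / (q^4 * X)"
    unfolding D0_def by (rule Dg_sym[OF q X])
  have D0: "D0 \<noteq> 0" using D by (simp add: D0_def)
  show ?thesis unfolding e
    using q X D0 unfolding D0_def[symmetric]
    by (simp add: field_simps power2_eq_square power4_eq_xxxx)
qed

lemma fres_sym:
  assumes q: "q \<noteq> 0" and D: "Dw lam mu w q \<noteq> 0"
  shows "fres lam mu w n (1/q) = - (q^2) * fres lam mu w n q"
proof -
  have X: "q^(2*w) \<noteq> 0" using q by simp
  have t0: "(1 + (1/q)^2) / (1/q) = (1 + q^2) / q"
    using q by (simp add: field_simps power2_eq_square)
  have t: "((1 + (1/q)^2) / (1/q)) ^ n = ((1 + q^2) / q) ^ n" unfolding t0 ..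
  have p: "(1/q)^(2*w) = 1 / q^(2*w)" by (simp add: power_one_over)
  show ?thesis
    unfolding fres_def Dw_def t p
    by (rule F_sym[OF q X]) (use D in \<open>simp add: Dw_def\<close>)
qed

lemma Dw_poly: "\<exists>P. P \<noteq> 0 \<and> (\<forall>p. Dw lam mu w p = poly P p)" if "w \<ge> 1"
proof -
  define L where "L = (complex_of_real lam)^2"
  define M where "M = (complex_of_real mu)^2"
  define P where "P = [:1, 0, -L:] * [:1, 0, -M:] - [:L, 0, -1:] * [:M, 0, -1:] * monom 1 (2*w)"
  have e: "Dw lam mu w p = poly P p" for p
    unfolding Dw_def P_def L_def M_def by (simp add: poly_monom algebra_simps power2_eq_square)
  have "poly P 0 = 1" using that unfolding e[symmetric] by (simp add: Dw_def)
  then have "P \<noteq> 0" by auto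
  with e show ?thesis by blast
qed

lemma Dw_finite: "w \<ge> 1 \<Longrightarrow> finite {p. Dw lam mu w p = 0}"
  using Dw_poly[of w lam mu] poly_roots_finite by fastforce

lemma Dw_0: "w \<ge> 1 \<Longrightarrow> Dw lam mu w 0 = 1"
  by (simp add: Dw_def)

lemma Dw_holo: "(\<lambda>p. Dw lam mu w p) holomorphic_on S"
  unfolding Dw_def by (intro holomorphic_intros)

lemma fres_holo: "fres lam mu w n holomorphic_on (UNIV - insert 0 {p. Dw lam mu w p = 0})"
proof -
  have "fres lam mu w n = (\<lambda>p. (1 - p^2) * ((1 - (of_real mu)^2 * p^2) + ((of_real mu)^2 - p^2) * p^(2*w)) / Dw lam mu w p
     * ((1 + p^2) / p) ^ n * (1 / p))" by (rule ext) (simp add: fres_def)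
  moreover have "\<dots> holomorphic_on (UNIV - insert 0 {p. Dw lam mu w p = 0})"
    by (intro holomorphic_intros Dw_holo) auto
  ultimately show ?thesis by simp
qed



lemma res0:
  assumes w: "w \<ge> 1"
  shows "residue (fres lam mu w n) 0 = cc ((complex_of_real lam)^2) ((complex_of_real mu)^2) w n 0"
proof -
  define L where "L = (complex_of_real lam)^2"
  define M where "M = (complex_of_real mu)^2"
  have P: "(\<lambda>z. (1 - z^2) * ((1 - M * z^2) * z^0 + (M - z^2) * z^(2*w-0))) has_fps_expansion Pfps M w 0"
    unfolding Pfps_def by (intro fps_expansion_intros)
  have D: "(\<lambda>z. (1 - L * z^2) * (1 - M * z^2) - (L - z^2) * (M - z^2) * z^(2*w)) has_fps_expansion Dfps L M w"
    unfolding Dfps_def by (intro fps_expansion_intros)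
  have D': "(\<lambda>z. (1 - L * z^2) * (1 - M * z^2) - (L - z^2) * (M - z^2) * z^(2*w)) = Dw lam mu w"
    by (rule ext) (simp add: Dw_def L_def M_def)
  have Q: "(\<lambda>z. (1 - z^2) * ((1 - M * z^2) * z^0 + (M - z^2) * z^(2*w-0)) / Dw lam mu w z) has_fps_expansion (Pfps M w 0 / Dfps L M w)"
    by (rule has_fps_expansion_divide'[OF P D[unfolded D']]) (use Dfps_0[OF w] in simp)
  have T: "(\<lambda>z::complex. (1 + z^2)^n) has_fps_expansion (1 + fps_X^2)^n"
    by (intro fps_expansion_intros)
  define Hf where "Hf = (\<lambda>z. (1 + z^2)^n * ((1 - z^2) * ((1 - M * z^2) * z^0 + (M - z^2) * z^(2*w-0)) / Dw lam mu w z))"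
  have H: "Hf has_fps_expansion ((1 + fps_X^2)^n * (Pfps M w 0 / Dfps L M w))"
    unfolding Hf_def by (rule has_fps_expansion_mult[OF T Q])
  have G: "Pfps M w 0 / Dfps L M w = Gf L M w 0"
    unfolding Gf_def by (rule fps_divide_unit) (use Dfps_0[OF w] in simp)
  have fe: "fres lam mu w n = (\<lambda>z. Hf z / z ^ Suc n)"
  proof (rule ext)
    fix z :: complex
    show "fres lam mu w n z = Hf z / z ^ Suc n"
    proof (cases "z = 0")
      case True then show ?thesis by (simp add: fres_def Hf_def)
    next
      case False then show ?thesis
        by (simp add: fres_def Hf_def L_def M_def power_divide field_simps)
    qed
  qed
  have "residue (fres lam mu w n) 0 = fps_nth ((1 + fps_X^2)^n * Gf L M w 0) n"
    unfolding fe G[symmetric] by (rule residue_fps_expansion_over_power_at_0[OF H])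
  then show ?thesis unfolding cc_def L_def M_def .
qed



lemma transfer_circle:
  fixes f :: "complex \<Rightarrow> complex" and R :: real
  assumes R: "R > 0"
    and sym: "\<And>q. norm q = R \<Longrightarrow> f (1/q) = - (q^2) * f q"
    and I: "(f has_contour_integral I) (reversepath (circlepath 0 (1/R)))"
  shows "(f has_contour_integral I) (circlepath 0 R)"
proof -
  let ?g = "reversepath (circlepath 0 (1/R))"
  have eq: "f (circlepath 0 R t) * vector_derivative (circlepath 0 R) (at t within {0..1})
          = f (?g t) * vector_derivative ?g (at t within {0..1})" if t: "t \<in> {0..1}" for t
  proof -
    define u where "u = exp (2 * of_real pi * \<i> * of_real t)"
    have u0: "u \<noteq> 0" by (simp add: u_def)
    have nu: "norm u = 1" unfolding u_def by (simp add: norm_exp_eq_Re)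
    have e1: "exp (2 * of_real pi * \<i> * of_real (1 - t)) = 1 / u"
    proof -
      have "2 * of_real pi * \<i> * of_real (1 - t) = 2 * of_real pi * \<i> - 2 * of_real pi * \<i> * (of_real t :: complex)"
        by (simp add: algebra_simps)
      then show ?thesis by (simp add: u_def exp_diff)
    qed
    have f': "((circlepath 0 (1/R)) has_vector_derivative (2 * pi * \<i> * (1/R) * exp (2 * of_real pi * \<i> * (1 - t)))) (at (1 - t))"
      using has_vector_derivative_circlepath[of 0 "1/R" "1 - t" UNIV] by simp
    have "(circlepath 0 (1/R) \<circ> (\<lambda>x. 1 - x) has_vector_derivative -1 *\<^sub>R (2 * pi * \<i> * (1/R) * exp (2 * of_real pi * \<i> * (1 - t)))) (at t)"
      by (intro vector_diff_chain_within has_vector_derivative_at_within [OF f'] derivative_eq_intros | simp)+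
    then have gd: "(?g has_vector_derivative - (2 * pi * \<i> * (1/R) * exp (2 * of_real pi * \<i> * (1 - t)))) (at t)"
      by (simp add: o_def reversepath_def)
    have vg: "vector_derivative ?g (at t within {0..1}) = - (2 * pi * \<i> * (1/R) * (1 / u))"
      using vector_derivative_at_within_ivl[OF gd, of 0 1] t e1 by simp
    have vc: "vector_derivative (circlepath 0 R) (at t within {0..1}) = 2 * pi * \<i> * R * u"
      using vector_derivative_circlepath01[of t 0 R] t by (simp add: u_def)
    define q where "q = complex_of_real R * u"
    have q0: "q \<noteq> 0" using R u0 by (simp add: q_def)
    have nq: "norm q = R" using R nu by (simp add: q_def norm_mult)
    have cq: "circlepath 0 R t = q" by (simp add: circlepath q_def u_def)
    have "?g t = 0 + complex_of_real (1/R) * exp (2 * of_real pi * \<i> * of_real (1 - t))"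
      by (simp only: reversepath_def circlepath)
    also have "\<dots> = 0 + complex_of_real (1/R) * (1 / u)" by (simp only: e1)
    finally have gq: "?g t = 1 / q" using R u0 by (simp add: q_def field_simps)
    show ?thesis unfolding vg vc cq gq sym[OF nq]
      using q0 u0 R by (simp add: q_def field_simps power2_eq_square)
  qed
  show ?thesis
    using I unfolding has_contour_integral_def
    by (subst has_integral_cong[OF eq]) auto
qed

lemma sum_res:
  assumes w: "w \<ge> 1"
  shows "(\<Sum>p\<in>{p. Dw lam mu w p = 0}. residue (fres lam mu w n) p) = -2 * residue (fres lam mu w n) 0"
proof -
  define Zs where "Zs = {p. Dw lam mu w p = 0}"
  define f where "f = fres lam mu w n"
  define R where "R = 1 + (\<Sum>z\<in>Zs. norm z + 1 / norm z)"
  have fin: "finite Zs" unfolding Zs_def by (rule Dw_finite[OF w])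
  have z0: "0 \<notin> Zs" using Dw_0[OF w] by (simp add: Zs_def)
  have bnd: "norm z < R \<and> 1 / norm z < R" if "z \<in> Zs" for z
  proof -
    have "norm z + 1 / norm z \<le> (\<Sum>z\<in>Zs. norm z + 1 / norm z)"
      by (rule member_le_sum[OF that]) (auto simp: fin)
    moreover have "norm z \<ge> 0" "1 / norm z \<ge> 0" by auto
    ultimately show ?thesis unfolding R_def by linarith
  qed
  have R1: "R \<ge> 1" unfolding R_def by (simp add: sum_nonneg)
  then have R0: "R > 0" by simp
  have ptsR: "norm p < R" if "p \<in> insert 0 Zs" for p
    using that bnd R1 by auto
  have holo: "f holomorphic_on UNIV - insert 0 Zs"
    unfolding f_def Zs_def by (rule fres_holo)
  have big: "contour_integral (circlepath 0 R) f = 2 * pi * \<i> * (\<Sum>p\<in>insert 0 Zs. winding_number (circlepath 0 R) p * residue f p)"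
  proof (rule Residue_theorem[of UNIV])
    show "path_image (circlepath 0 R) \<subseteq> UNIV - insert 0 Zs"
    proof
      fix x assume "x \<in> path_image (circlepath 0 R)"
      then have "norm x = R" using R0 by (simp add: dist_norm)
      then show "x \<in> UNIV - insert 0 Zs" using ptsR by force
    qed
  qed (use fin holo in auto)
  have wind: "winding_number (circlepath 0 R) p = 1" if "p \<in> insert 0 Zs" for p
    using ptsR[OF that] by (intro winding_number_circlepath) simp
  have big2: "contour_integral (circlepath 0 R) f = 2 * pi * \<i> * (residue f 0 + (\<Sum>p\<in>Zs. residue f p))"
    unfolding big using wind fin z0 by (simp add: sum.insert)
  have small: "(f has_contour_integral 2 * pi * \<i> * residue f 0) (circlepath 0 (1/R))"
  proof (rule base_residue[of "UNIV - Zs"])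
    show "open (UNIV - Zs)" using fin by (simp add: open_Diff finite_imp_closed)
    show "f holomorphic_on UNIV - Zs - {0}" 
    proof -
      have "UNIV - Zs - {0} = UNIV - insert 0 Zs" by auto
      then show ?thesis using holo by simp
    qed
    show "cball 0 (1/R) \<subseteq> UNIV - Zs"
    proof
      fix p :: complex assume p: "p \<in> cball 0 (1/R)"
      show "p \<in> UNIV - Zs"
      proof -
        have "False" if pz: "p \<in> Zs"
        proof -
          have "p \<noteq> 0" using z0 pz by auto
          then have np: "norm p > 0" by simp
          have "1 / norm p < R" using bnd[OF pz] by simp
          then have a: "1 < R * norm p" using np by (simp add: field_simps)
          have "norm p \<le> 1/R" using p by simp
          then have "R * norm p \<le> 1" using R0 by (simp add: field_simps)
          with a show False by simp
        qed
        then show ?thesis by auto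
      qed
    qed
  qed (use z0 R0 in auto)
  have rev: "(f has_contour_integral - (2 * pi * \<i> * residue f 0)) (reversepath (circlepath 0 (1/R)))"
    by (rule has_contour_integral_reversepath[OF valid_path_circlepath small])
  have sym: "f (1/q) = - (q^2) * f q" if "norm q = R" for q
  proof -
    have "q \<notin> Zs" using bnd that by auto
    moreover have "q \<noteq> 0" using that R0 by auto
    ultimately show ?thesis unfolding f_def by (intro fres_sym) (auto simp: Zs_def)
  qed
  have "(f has_contour_integral - (2 * pi * \<i> * residue f 0)) (circlepath 0 R)"
    by (rule transfer_circle[OF R0 sym rev])
  then have "contour_integral (circlepath 0 R) f = - (2 * pi * \<i> * residue f 0)"
    by (rule contour_integral_unique)
  then have "2 * pi * \<i> * (residue f 0 + (\<Sum>p\<in>Zs. residue f p)) = 2 * pi * \<i> * (- residue f 0)"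
    using big2 by simp
  then have "2 * pi * \<i> = (0::complex) \<or> residue f 0 + (\<Sum>p\<in>Zs. residue f p) = - residue f 0"
    by (simp only: mult_cancel_left)
  then have "residue f 0 + (\<Sum>p\<in>Zs. residue f p) = - residue f 0"
    by simp
  then have "(\<Sum>p\<in>Zs. residue f p) = -2 * residue f 0" by algebra
  then show ?thesis unfolding f_def Zs_def .
qed

theorem mainTheorem3:
  fixes lam mu :: real and n w :: nat
  assumes "lam \<ge> 0" and "mu \<ge> 0" and "w \<ge> 1"
  shows "complex_of_real (Zpf n w (1 + lam^2) (1 + mu^2)) =
         - (1/2) * (\<Sum>p\<in>{p. Dw lam mu w p = 0}. residue (fres lam mu w n) p)"
proof -
  define L where "L = (complex_of_real lam)^2"
  define M where "M = (complex_of_real mu)^2"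
  have "complex_of_real (Zpf n w (1 + lam^2) (1 + mu^2)) = V w (1 + L) (1 + M) n 0"
    unfolding Zpf_def V_def wt_def L_def M_def slit_loops_def Pn_def by simp
  also have "\<dots> = V w (1 + L) (1 + M) n (int 0)" by simp
  also have "\<dots> = cc L M w n 0" using V_cc[OF assms(3)] by blast
  also have "\<dots> = residue (fres lam mu w n) 0" unfolding L_def M_def by (rule res0[OF assms(3), symmetric])
  also have "\<dots> = - (1/2) * (\<Sum>p\<in>{p. Dw lam mu w p = 0}. residue (fres lam mu w n) p)"
    unfolding sum_res[OF assms(3)] by simp
  finally show ?thesis .
qed


end
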